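(* Let $G=(V,E)$ be a graph on $V=\{1,\dots,n\}$ and $(\tilde g,\theta)$ a nominal configuration such that each of the sets $\{\tilde p^x_{i,\theta}\}_{i\in V}$, $\{\tilde p^y_{i,\theta}\}_{i\in V}$, $\{\tilde\phi_i\}_{i\in V}$ affinely spans $\mathbb R$. Then $\mathrm{null}(M(G,\tilde g,\theta))=\Pi(\tilde g,\theta)$ if and only if $\mathrm{rank}(M(G,\tilde g,\theta))=3n-6$.
   Context: $E\subseteq\{(i,k):i\ne k\}$, $(i,k)\in E$ means agent $k$ measures agent $i$. $R(\theta)$ is the $2\times2$ rotation by $\theta$, $\Theta=\mathrm{diag}(R(\theta),1)$. $\tilde g_i=[\tilde p_i^\top,\tilde\phi_i]^\top\in\mathbb R^3$, $\Theta^\top\tilde g_i=[\tilde p^x_{i,\theta},\tilde p^y_{i,\theta},\tilde\phi_i]^\top$; $\tilde p^x_{uv,\theta}=\tilde p^x_{u,\theta}-\tilde p^x_{v,\theta}$, similarly $y$, $\tilde\phi_{uv}=\tilde\phi_u-\tilde\phi_v$; $w_{uv}=\mathrm{diag}(\tilde p^x_{uv,\theta},\tilde p^y_{uv,\theta},\tilde\phi_{uv})$, $W_{uv}=w_{uv}\Theta^\top$. $C=\{(i,j,k)\in V^3:(i,k),(j,k)\in E,\ i<j\}$. $M(G,\tilde g,\theta)\in\mathbb R^{3n\times3n}$: the $k$-th $3$-block of $Mg$ is $\sum_{(i,j,k)\in C}(W_{jk}(g_i-g_k)+W_{ki}(g_j-g_k))$. $\Pi(\tilde g,\theta)=\{g\in\mathbb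 R^{3n}:g_i=\tau+\Theta\,\mathrm{diag}(s)\Theta^\top\tilde g_i\ \forall i,\ s,\tau\in\mathbb R^3\}$. A set of reals affinely spans $\mathbb R$ iff it contains two distinct elements. *)

theory Defs
  imports Complex_Main "Jordan_Normal_Form.DL_Rank" "Jordan_Normal_Form.Matrix_Kernel"
begin

(* Agents are indexed 0..n-1 (the paper uses 1..n).  A vector g in R^{3n} is a
   real vec of dimension 3n; its i-th 3-block is entries 3i, 3i+1, 3i+2. *)

definition blk :: "real vec \<Rightarrow> nat \<Rightarrow> real vec" where
  "blk g i = vec 3 (\<lambda>a. g $ (3 * i + a))"

definition Theta :: "real \<Rightarrow> real mat" where
  "Theta \<theta> = mat 3 3 (\<lambda>(r, c).
      if r = 0 \<and> c = 0 then cos \<theta> else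
      if r = 0 \<and> c = 1 then - sin \<theta> else
      if r = 1 \<and> c = 0 then sin \<theta> else
      if r = 1 \<and> c = 1 then cos \<theta> else
      if r = 2 \<and> c = 2 then 1 else 0)"

(* Theta^T gt_i = [p^x_{i,theta}, p^y_{i,theta}, phi_i] *)
definition rotc :: "real vec \<Rightarrow> real \<Rightarrow> nat \<Rightarrow> real vec" where
  "rotc gt \<theta> i = transpose_mat (Theta \<theta>) *\<^sub>v blk gt i"

definition w_mat :: "real vec \<Rightarrow> real \<Rightarrow> nat \<Rightarrow> nat \<Rightarrow> real mat" where
  "w_mat gt \<theta> u v = mat_diag 3 (\<lambda>a. rotc gt \<theta> u $ a - rotc gt \<theta> v $ a)"

definition W_mat :: "real vec \<Rightarrow> real \<Rightarrow> nat \<Rightarrow> nat \<Rightarrow> real mat" where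
  "W_mat gt \<theta> u v = w_mat gt \<theta> u v * transpose_mat (Theta \<theta>)"

definition triples :: "nat \<Rightarrow> (nat \<times> nat) set \<Rightarrow> (nat \<times> nat \<times> nat) set" where
  "triples n E = {(i, j, k). i < n \<and> j < n \<and> k < n \<and> (i, k) \<in> E \<and> (j, k) \<in> E \<and> i < j}"

definition M_block :: "nat \<Rightarrow> (nat \<times> nat) set \<Rightarrow> real vec \<Rightarrow> real \<Rightarrow> real vec \<Rightarrow> nat \<Rightarrow> real vec" where
  "M_block n E gt \<theta> g k =
     finsum_vec TYPE(real) 3
       (\<lambda>(i, j, k'). W_mat gt \<theta> j k *\<^sub>v (blk g i - blk g k) + W_mat gt \<theta> k i *\<^sub>v (blk g j - blk g k))
       {(i, j, k'). (i, j, k') \<in> triples n E \<and> k' = k}"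

definition M_apply :: "nat \<Rightarrow> (nat \<times> nat) set \<Rightarrow> real vec \<Rightarrow> real \<Rightarrow> real vec \<Rightarrow> real vec" where
  "M_apply n E gt \<theta> g = vec (3 * n) (\<lambda>r. M_block n E gt \<theta> g (r div 3) $ (r mod 3))"

definition M_mat :: "nat \<Rightarrow> (nat \<times> nat) set \<Rightarrow> real vec \<Rightarrow> real \<Rightarrow> real mat" where
  "M_mat n E gt \<theta> = mat (3 * n) (3 * n) (\<lambda>(r, c). M_apply n E gt \<theta> (unit_vec (3 * n) c) $ r)"

definition Pi_set :: "nat \<Rightarrow> real vec \<Rightarrow> real \<Rightarrow> real vec set" where
  "Pi_set n gt \<theta> = {g \<in> carrier_vec (3 * n). \<exists>s \<in> carrier_vec 3. \<exists>\<tau> \<in> carrier_vec 3.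
      \<forall>i < n. blk g i = \<tau> + (Theta \<theta> * mat_diag 3 (\<lambda>a. s $ a) * transpose_mat (Theta \<theta>)) *\<^sub>v blk gt i}"

(* a finite family of reals affinely spans R iff it has two distinct members *)
definition aff_spans_R :: "real set \<Rightarrow> bool" where
  "aff_spans_R S \<longleftrightarrow> (\<exists>a \<in> S. \<exists>b \<in> S. a \<noteq> b)"

end

theory Submission
  imports Defs
begin

lemma rank_nullity_mat:
  fixes A :: "'a::field mat"
  assumes A: "A \<in> carrier_mat nr nc"
  shows "vec_space.rank nr A + kernel_dim A = nc"
proof -
  interpret NC: vec_space "TYPE('a)" nc .
  interpret NR: vec_space "TYPE('a)" nr .
  interpret K: kernel nr nc A by unfold_locales (rule A)
  interpret L: linear_map class_ring "module_vec TYPE('a) nc" "module_vec TYPE('a) nr" "\<lambda>v. A *\<^sub>v v"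
  proof unfold_locales
    show "(\<lambda>v. A *\<^sub>v v) \<in> LinearCombinations.module_hom class_ring (module_vec TYPE('a) nc) (module_vec TYPE('a) nr)"
      unfolding LinearCombinations.module_hom_def using A
      by (auto simp: mult_add_distrib_mat_vec mult_mat_vec module_vec_simps)
  qed
  have im: "L.imT = NR.span (set (cols A))"
    using NR.col_space_eq[OF A] A unfolding L.im_def NR.col_space_def by auto
  have ker: "L.kerT = mat_kernel A"
    using A unfolding L.ker_def mat_kernel_def by (auto simp: module_vec_simps)
  have "vectorspace.dim class_ring (NR.vs L.imT) + vectorspace.dim class_ring (NC.vs L.kerT) = NC.dim"
    by (rule L.rank_nullity) simp
  then show ?thesis unfolding im ker NR.rank_def NC.dim_is_n using A K.kernel_dim by simp
qed

lemma mult_unit_col: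
  fixes B :: "'a::comm_ring_1 mat"
  assumes B: "B \<in> carrier_mat nr k" and j: "j < k"
  shows "B *\<^sub>v unit_vec k j = col B j"
  using B j by (intro eq_vecI) (auto simp: scalar_prod_right_unit)

lemma kernel_eq_image_iff:
  fixes M B :: "'a::field mat"
  assumes M: "M \<in> carrier_mat nr nc" and B: "B \<in> carrier_mat nc k"
    and inj: "\<And>x. x \<in> carrier_vec k \<Longrightarrow> B *\<^sub>v x = 0\<^sub>v nc \<Longrightarrow> x = 0\<^sub>v k"
    and ker: "\<And>x. x \<in> carrier_vec k \<Longrightarrow> M *\<^sub>v (B *\<^sub>v x) = 0\<^sub>v nr"
  shows "mat_kernel M = {B *\<^sub>v x | x. x \<in> carrier_vec k} \<longleftrightarrow> kernel_dim M = k"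
proof -
  interpret K: kernel nr nc M by unfold_locales (rule M)
  define b where "b = set (cols B)"
  have colk: "col B j = B *\<^sub>v unit_vec k j" if "j < k" for j
    using mult_unit_col[OF B that] by simp
  have dist: "distinct (cols B)"
  proof -
    { fix i j assume ij: "i < k" "j < k" "i \<noteq> j" "col B i = col B j"
      have "B *\<^sub>v (unit_vec k i - unit_vec k j) = B *\<^sub>v unit_vec k i - B *\<^sub>v unit_vec k j"
        using B by (simp add: mult_minus_distrib_mat_vec)
      also have "\<dots> = 0\<^sub>v nc" using ij colk B by simp
      finally have "(unit_vec k i - unit_vec k j :: 'a vec) = 0\<^sub>v k" using inj[of "unit_vec k i - unit_vec k j"] by simp
      hence "(unit_vec k i - unit_vec k j :: 'a vec) $ i = 0\<^sub>v k $ i" by simp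
      hence False using ij by simp }
    thus ?thesis using B unfolding distinct_conv_nth by (auto simp: cols_length)
  qed
  have li: "K.NC.lin_indpt b"
  proof
    assume "K.NC.lin_dep b"
    then obtain v where "v \<in> carrier_vec k" "v \<noteq> 0\<^sub>v k" "B *\<^sub>v v = 0\<^sub>v nc"
      using K.NC.lin_depE[OF B _ dist] unfolding b_def by blast
    thus False using inj by blast
  qed
  have cardb: "card b = k" unfolding b_def using distinct_card[OF dist] B by (simp add: cols_length)
  have finb: "finite b" unfolding b_def by simp
  have P: "{B *\<^sub>v x | x. x \<in> carrier_vec k} = K.NC.span b"
    using K.NC.col_space_eq[OF B] B unfolding K.NC.col_space_def b_def by auto
  have bk: "b \<subseteq> mat_kernel M"
  proof
    fix v assume "v \<in> b"
    then obtain j where j: "j < k" "v = col B j" unfolding b_def using B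
      by (auto simp: cols_def)
    show "v \<in> mat_kernel M" using j colk ker[of "unit_vec k j"] B M
      by (auto intro!: mat_kernelI[OF M])
  qed
  have li2: "K.Ker.lin_indpt b" using K.lindep_same[OF bk] li by simp
  have sp: "K.Ker.span b = K.NC.span b" using K.span_same[OF bk] .
  have fd: "K.Ker.fin_dim"
  proof -
    obtain C where "finite C" "K.basis C" using kernel_basis_exists[OF M] by blast
    thus ?thesis unfolding K.Ker.fin_dim_def K.Ker.basis_def by blast
  qed
  show ?thesis
  proof
    assume eq: "mat_kernel M = {B *\<^sub>v x | x. x \<in> carrier_vec k}"
    have "K.basis b" unfolding K.Ker.basis_def using li2 sp eq P bk by simp
    hence "K.dim = card b" using K.Ker.dim_basis[OF finb] by simp
    thus "kernel_dim M = k" using cardb by simp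
  next
    assume "kernel_dim M = k"
    hence "K.basis b" using K.Ker.dim_li_is_basis[OF fd finb _ li2] bk cardb by simp
    hence "K.Ker.span b = mat_kernel M" unfolding K.Ker.basis_def by simp
    thus "mat_kernel M = {B *\<^sub>v x | x. x \<in> carrier_vec k}" using sp P by simp
  qed
qed

lemma sum3: "(\<Sum>b<3. f b) = f (0::nat) + f 1 + (f 2 :: 'a::comm_monoid_add)"
  by (simp add: numeral_3_eq_3 numeral_2_eq_2 ac_simps)

lemma Theta_carrier[simp]: "Theta t \<in> carrier_mat 3 3"
  by (simp add: Theta_def)
lemma Theta_dim[simp]: "dim_row (Theta t) = 3" "dim_col (Theta t) = 3"
  by (simp_all add: Theta_def)
lemma blk_carrier[simp]: "blk g i \<in> carrier_vec 3" "dim_vec (blk g i) = 3"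
  by (simp_all add: blk_def)

lemma ThetaT_Theta: "transpose_mat (Theta t) * Theta t = 1\<^sub>m 3"
proof (rule eq_matI)
  fix i j assume ij: "i < dim_row (1\<^sub>m 3)" "j < dim_col (1\<^sub>m 3)"
  hence "i < 3" "j < 3" by auto
  thus "(transpose_mat (Theta t) * Theta t) $$ (i, j) = 1\<^sub>m 3 $$ (i, j)"
    by (auto simp: Theta_def scalar_prod_def sum3 row_def col_def less_Suc_eq numeral_3_eq_3
        power2_eq_square[symmetric])
qed auto

lemma Tv_carrier[simp]: "Theta t *\<^sub>v v \<in> carrier_vec 3" "transpose_mat (Theta t) *\<^sub>v v \<in> carrier_vec 3"
  unfolding carrier_vec_def by simp_all
lemma rotc_carrier[simp]: "rotc gt t i \<in> carrier_vec 3"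
  by (simp add: rotc_def)
lemma TT_v: "v \<in> carrier_vec 3 \<Longrightarrow> transpose_mat (Theta t) *\<^sub>v (Theta t *\<^sub>v v) = v"
  by (subst assoc_mult_mat_vec[of _ 3 3 _ 3, symmetric]) (auto simp: ThetaT_Theta)

lemma W_mult_Theta:
  assumes v: "v \<in> carrier_vec 3"
  shows "W_mat gt t u u' *\<^sub>v (Theta t *\<^sub>v v) = vec 3 (\<lambda>a. (rotc gt t u $ a - rotc gt t u' $ a) * v $ a)"
proof -
  have "W_mat gt t u u' *\<^sub>v (Theta t *\<^sub>v v) = w_mat gt t u u' *\<^sub>v (transpose_mat (Theta t) *\<^sub>v (Theta t *\<^sub>v v))"
    unfolding W_mat_def using v
    by (subst assoc_mult_mat_vec[of _ 3 3 _ 3], auto simp: w_mat_def)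
  also have "\<dots> = w_mat gt t u u' *\<^sub>v v" using v by (simp add: TT_v)
  also have "\<dots> = vec 3 (\<lambda>a. (rotc gt t u $ a - rotc gt t u' $ a) * v $ a)"
    using v by (intro eq_vecI) (auto simp: w_mat_def mat_diag_def scalar_prod_def sum3 less_Suc_eq numeral_3_eq_3)
  finally show ?thesis .
qed

definition Bm :: "nat \<Rightarrow> real vec \<Rightarrow> real \<Rightarrow> real mat" where
  "Bm n gt t = mat (3*n) 6 (\<lambda>(r,c). if c < 3 then Theta t $$ (r mod 3, c) * rotc gt t (r div 3) $ c
      else if c - 3 = r mod 3 then 1 else 0)"

definition uvec :: "real vec \<Rightarrow> real vec \<Rightarrow> real \<Rightarrow> nat \<Rightarrow> real vec" where
  "uvec x gt t i = vec 3 (\<lambda>c. x $ c * rotc gt t i $ c)"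

definition tv :: "real vec \<Rightarrow> real vec" where
  "tv x = vec 3 (\<lambda>a. x $ (3 + a))"

lemma uvec_carrier[simp]: "uvec x gt t i \<in> carrier_vec 3" by (simp add: uvec_def)
lemma tv_carrier[simp]: "tv x \<in> carrier_vec 3" by (simp add: tv_def)

lemma Bm_carrier[simp]: "Bm n gt t \<in> carrier_mat (3*n) 6" by (simp add: Bm_def)
lemma Bm_dim[simp]: "dim_row (Bm n gt t) = 3*n" "dim_col (Bm n gt t) = 6" by (simp_all add: Bm_def)

lemma sum6: "(\<Sum>b<6. f b) = f (0::nat) + f 1 + f 2 + f 3 + f 4 + (f 5 :: 'a::comm_monoid_add)"
  by (simp add: eval_nat_numeral ac_simps)

lemma idx_blk: "g $ r = blk g (r div 3) $ (r mod 3)"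
  by (simp add: blk_def)

lemma blkB:
  assumes x: "x \<in> carrier_vec 6" and i: "i < n"
  shows "blk (Bm n gt t *\<^sub>v x) i = tv x + Theta t *\<^sub>v uvec x gt t i"
proof (rule eq_vecI)
  fix a assume "a < dim_vec (tv x + Theta t *\<^sub>v uvec x gt t i)"
  hence a: "a < 3" by (simp add: tv_def)
  have r: "3 * i + a < 3 * n" using a i by simp
  have dm: "(3 * i + a) div 3 = i" "(3 * i + a) mod 3 = a" using a by auto
  have "blk (Bm n gt t *\<^sub>v x) i $ a = (\<Sum>c<6. Bm n gt t $$ (3*i+a, c) * x $ c)"
    using a r x by (simp add: blk_def scalar_prod_def lessThan_atLeast0 index_mult_mat_vec)
  also have "\<dots> = (\<Sum>c<6. (if c < 3 then Theta t $$ (a, c) * rotc gt t i $ c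
      else if c - 3 = a then 1 else 0) * x $ c)"
    using r dm by (intro sum.cong) (auto simp: Bm_def)
  also have "\<dots> = (\<Sum>c<3. Theta t $$ (a, c) * (x $ c * rotc gt t i $ c)) + x $ (3 + a)"
  proof -
    have "a = 0 \<or> a = 1 \<or> a = 2" using a by auto
    thus ?thesis unfolding sum6 sum3 by auto
  qed
  also have "\<dots> = (tv x + Theta t *\<^sub>v uvec x gt t i) $ a"
    using a by (simp add: tv_def uvec_def scalar_prod_def lessThan_atLeast0)
  finally show "blk (Bm n gt t *\<^sub>v x) i $ a = (tv x + Theta t *\<^sub>v uvec x gt t i) $ a" .
qed (simp add: tv_def)

lemma mat_diag_mult_vec_idx:
  assumes "v \<in> carrier_vec m" "i < m"
  shows "(mat_diag m f *\<^sub>v v) $ i = f i * v $ i"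
proof -
  have "(mat_diag m f *\<^sub>v v) $ i = (\<Sum>j\<in>{0..<m}. (if i = j then f j else 0) * v $ j)"
    using assms by (simp add: mat_diag_def scalar_prod_def)
  also have "\<dots> = (\<Sum>j\<in>{0..<m}. if i = j then f j * v $ j else 0)"
    by (rule sum.cong) auto
  also have "\<dots> = f i * v $ i" using assms by (simp add: sum.delta)
  finally show ?thesis .
qed

lemma mat_diag_dims[simp]: "dim_row (mat_diag m f) = m" "dim_col (mat_diag m f) = m"
  by (simp_all add: mat_diag_def)

lemma Pi_form:
  assumes s: "s \<in> carrier_vec 3"
  shows "(Theta t * mat_diag 3 (\<lambda>a. s $ a) * transpose_mat (Theta t)) *\<^sub>v blk gt i
    = Theta t *\<^sub>v vec 3 (\<lambda>c. s $ c * rotc gt t i $ c)"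
proof -
  have "(Theta t * mat_diag 3 (\<lambda>a. s $ a) * transpose_mat (Theta t)) *\<^sub>v blk gt i
    = (Theta t * mat_diag 3 (\<lambda>a. s $ a)) *\<^sub>v (transpose_mat (Theta t) *\<^sub>v blk gt i)"
    by (rule assoc_mult_mat_vec[of _ 3 3 _ 3]) (auto intro: mult_carrier_mat[OF Theta_carrier mat_diag_dim])
  also have "\<dots> = Theta t *\<^sub>v (mat_diag 3 (\<lambda>a. s $ a) *\<^sub>v (transpose_mat (Theta t) *\<^sub>v blk gt i))"
    by (rule assoc_mult_mat_vec[of _ 3 3 _ 3]) auto
  also have "mat_diag 3 (\<lambda>a. s $ a) *\<^sub>v (transpose_mat (Theta t) *\<^sub>v blk gt i) = vec 3 (\<lambda>c. s $ c * rotc gt t i $ c)"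
    by (intro eq_vecI) (simp_all add: mat_diag_mult_vec_idx[of _ 3] rotc_def del: index_mult_mat_vec)
  finally show ?thesis .
qed
lemma Pi_image2: "{Bm n gt t *\<^sub>v x | x. x \<in> carrier_vec 6} \<subseteq> Pi_set n gt t"
proof
  fix g assume "g \<in> {Bm n gt t *\<^sub>v x | x. x \<in> carrier_vec 6}"
  then obtain x where x: "x \<in> carrier_vec 6" and g: "g = Bm n gt t *\<^sub>v x" by blast
  define s where "s = vec 3 (\<lambda>c. x $ c)"
  have s: "s \<in> carrier_vec 3" by (simp add: s_def)
  have ux: "uvec x gt t i = vec 3 (\<lambda>c. s $ c * rotc gt t i $ c)" for i
    by (intro eq_vecI) (auto simp: uvec_def s_def)
  have bi: "blk g i = tv x + (Theta t * mat_diag 3 (\<lambda>a. s $ a) * transpose_mat (Theta t)) *\<^sub>v blk gt i"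
    if i: "i < n" for i
  proof -
    have "blk g i = tv x + Theta t *\<^sub>v uvec x gt t i" unfolding g by (rule blkB[OF x i])
    also have "\<dots> = tv x + (Theta t * mat_diag 3 (\<lambda>a. s $ a) * transpose_mat (Theta t)) *\<^sub>v blk gt i"
      by (simp only: Pi_form[OF s] ux)
    finally show ?thesis .
  qed
  have gc: "g \<in> carrier_vec (3*n)" unfolding g carrier_vec_def by simp
  have "\<exists>s\<in>carrier_vec 3. \<exists>\<tau>\<in>carrier_vec 3. \<forall>i<n. blk g i = \<tau> + (Theta t * mat_diag 3 (\<lambda>a. s $ a) * transpose_mat (Theta t)) *\<^sub>v blk gt i"
  proof (rule bexI[of _ s], rule bexI[of _ "tv x"])
    show "\<forall>i<n. blk g i = tv x + (Theta t * mat_diag 3 (\<lambda>a. s $ a) * transpose_mat (Theta t)) *\<^sub>v blk gt i"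
      using bi by simp
  qed (simp_all add: s)
  then show "g \<in> Pi_set n gt t" unfolding Pi_set_def using gc by simp
qed

lemma Pi_image1: "Pi_set n gt t \<subseteq> {Bm n gt t *\<^sub>v x | x. x \<in> carrier_vec 6}"
proof
  fix g assume gP: "g \<in> Pi_set n gt t"
  have g: "g \<in> carrier_vec (3*n)" using gP unfolding Pi_set_def by simp
  have "\<exists>s\<in>carrier_vec 3. \<exists>\<tau>\<in>carrier_vec 3. \<forall>i<n. blk g i = \<tau> + (Theta t * mat_diag 3 (\<lambda>a. s $ a) * transpose_mat (Theta t)) *\<^sub>v blk gt i"
    using gP unfolding Pi_set_def by simp
  then obtain s \<tau> where s: "s \<in> carrier_vec 3" and \<tau>: "\<tau> \<in> carrier_vec 3"
    and b: "\<forall>i<n. blk g i = \<tau> + (Theta t * mat_diag 3 (\<lambda>a. s $ a) * transpose_mat (Theta t)) *\<^sub>v blk gt i"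
    by blast
  define x where "x = vec 6 (\<lambda>c. if c < 3 then s $ c else \<tau> $ (c - 3))"
  have x: "x \<in> carrier_vec 6" by (simp add: x_def)
  have tvx: "tv x = \<tau>" using \<tau> by (intro eq_vecI) (auto simp: tv_def x_def)
  have ux: "uvec x gt t i = vec 3 (\<lambda>c. s $ c * rotc gt t i $ c)" for i
    by (intro eq_vecI) (auto simp: uvec_def x_def)
  have bb: "blk g i = blk (Bm n gt t *\<^sub>v x) i" if i: "i < n" for i
  proof -
    have "blk g i = \<tau> + (Theta t * mat_diag 3 (\<lambda>a. s $ a) * transpose_mat (Theta t)) *\<^sub>v blk gt i"
      using b i by simp
    also have "\<dots> = tv x + Theta t *\<^sub>v uvec x gt t i" by (simp only: Pi_form[OF s] ux tvx)
    also have "\<dots> = blk (Bm n gt t *\<^sub>v x) i" by (rule blkB[OF x i, symmetric])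
    finally show ?thesis .
  qed
  have "g = Bm n gt t *\<^sub>v x"
  proof (rule eq_vecI)
    fix r assume "r < dim_vec (Bm n gt t *\<^sub>v x)"
    hence r: "r < 3 * n" by simp
    hence i: "r div 3 < n" by linarith
    have "g $ r = blk g (r div 3) $ (r mod 3)" by (rule idx_blk)
    also have "\<dots> = blk (Bm n gt t *\<^sub>v x) (r div 3) $ (r mod 3)" by (simp only: bb[OF i])
    also have "\<dots> = (Bm n gt t *\<^sub>v x) $ r" by (rule idx_blk[symmetric])
    finally show "g $ r = (Bm n gt t *\<^sub>v x) $ r" .
  next
    have "dim_vec g = 3 * n" using g by (rule carrier_vecD)
    then show "dim_vec g = dim_vec (Bm n gt t *\<^sub>v x)" by simp
  qed
  then have "g = Bm n gt t *\<^sub>v x \<and> x \<in> carrier_vec 6" using x by (intro conjI)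
  then show "g \<in> {Bm n gt t *\<^sub>v x | x. x \<in> carrier_vec 6}" unfolding mem_Collect_eq by (rule exI[of _ x])
qed

lemma Pi_image: "Pi_set n gt t = {Bm n gt t *\<^sub>v x | x. x \<in> carrier_vec 6}"
  using Pi_image1 Pi_image2 by (rule subset_antisym)

lemma blk_zero: "i < n \<Longrightarrow> blk (0\<^sub>v (3*n)) i = 0\<^sub>v 3"
  by (intro eq_vecI) (auto simp: blk_def)

lemma Bm_inj:
  assumes sp: "\<And>a. a < 3 \<Longrightarrow> \<exists>i j. i < n \<and> j < n \<and> rotc gt t i $ a \<noteq> rotc gt t j $ a"
    and x: "x \<in> carrier_vec 6" and z: "Bm n gt t *\<^sub>v x = 0\<^sub>v (3*n)"
  shows "x = 0\<^sub>v 6"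
proof -
  have bz: "tv x + Theta t *\<^sub>v uvec x gt t i = 0\<^sub>v 3" if "i < n" for i
    using blkB[OF x that, of gt t] z blk_zero[OF that] by simp
  have cmp: "(Theta t *\<^sub>v uvec x gt t i) $ a = - (tv x $ a)" if "i < n" "a < 3" for i a
  proof -
    have "(tv x + Theta t *\<^sub>v uvec x gt t i) $ a = 0" using bz[OF that(1)] that(2) by simp
    thus ?thesis using that(2) by (simp add: tv_def)
  qed
  have ueq: "uvec x gt t i = uvec x gt t j" if "i < n" "j < n" for i j
  proof -
    have "Theta t *\<^sub>v uvec x gt t i = Theta t *\<^sub>v uvec x gt t j"
      by (rule eq_vecI) (simp_all add: cmp that del: index_mult_mat_vec)
    hence "transpose_mat (Theta t) *\<^sub>v (Theta t *\<^sub>v uvec x gt t i) = transpose_mat (Theta t) *\<^sub>v (Theta t *\<^sub>v uvec x gt t j)"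
      by simp
    thus ?thesis by (simp add: TT_v)
  qed
  have x0: "x $ a = 0" if a: "a < 3" for a
  proof -
    obtain i j where ij: "i < n" "j < n" "rotc gt t i $ a \<noteq> rotc gt t j $ a" using sp[OF a] by blast
    have "uvec x gt t i $ a = uvec x gt t j $ a" using ueq[OF ij(1,2)] by simp
    hence "x $ a * rotc gt t i $ a = x $ a * rotc gt t j $ a" using a by (simp add: uvec_def)
    thus ?thesis using ij(3) by simp
  qed
  obtain i0 where i0: "i0 < n" using sp[of 0] by auto
  have u0: "uvec x gt t i0 = 0\<^sub>v 3" by (intro eq_vecI) (auto simp: uvec_def x0)
  have "Theta t *\<^sub>v uvec x gt t i0 = 0\<^sub>v 3" unfolding u0 by (intro eq_vecI) auto
  hence tv0: "tv x = 0\<^sub>v 3" using bz[OF i0] by (intro eq_vecI) (auto simp: tv_def)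
  have x1: "x $ (3 + a) = 0" if "a < 3" for a
  proof -
    have "tv x $ a = 0" using tv0 that by simp
    thus ?thesis using that by (simp add: tv_def)
  qed
  show ?thesis
  proof (rule eq_vecI)
    fix c assume "c < dim_vec (0\<^sub>v 6 :: real vec)"
    hence c: "c < 6" by simp
    show "x $ c = 0\<^sub>v 6 $ c"
    proof (cases "c < 3")
      case True thus ?thesis using x0 c by simp
    next
      case False
      then obtain a where "c = 3 + a" "a < 3" using c by (metis add_diff_inverse_nat add_less_cancel_left numeral_Bit0 numeral_Bit1 numeral_One one_plus_numeral numeral_plus_numeral semiring_norm(5) semiring_norm(2))
      thus ?thesis using x1 c by simp
    qed
  next
    show "dim_vec x = dim_vec (0\<^sub>v 6 :: real vec)" using x by (simp add: carrier_vecD)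
  qed
qed

abbreviation Sk :: "nat \<Rightarrow> (nat \<times> nat) set \<Rightarrow> nat \<Rightarrow> (nat \<times> nat \<times> nat) set" where
  "Sk n E k \<equiv> {(i, j, k'). (i, j, k') \<in> triples n E \<and> k' = k}"

lemma Sk_finite: "finite (Sk n E k)"
proof (rule finite_subset)
  show "Sk n E k \<subseteq> {..<n} \<times> {..<n} \<times> {..<n}" by (auto simp: triples_def)
qed auto

lemma Sk_bounds: "(i, j, k') \<in> Sk n E k \<Longrightarrow> i < n \<and> j < n \<and> k < n \<and> k' = k"
  by (auto simp: triples_def)

lemma W_carrier[simp]: "W_mat gt t u v \<in> carrier_mat 3 3"
  unfolding W_mat_def w_mat_def by (rule mult_carrier_mat[of _ 3 3]) auto

lemma W_dim[simp]: "dim_row (W_mat gt t u v) = 3" "dim_col (W_mat gt t u v) = 3"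
  using W_carrier[of gt t u v] by (simp_all only: carrier_matD)

lemma Wv_carrier[simp]: "W_mat gt t u v *\<^sub>v w \<in> carrier_vec 3"
  unfolding carrier_vec_def by simp

lemma M_block_idx:
  assumes a: "a < 3"
  shows "M_block n E gt t g k $ a = (\<Sum>p\<in>Sk n E k. (case p of (i, j, k') \<Rightarrow>
     (W_mat gt t j k *\<^sub>v (blk g i - blk g k)) $ a + (W_mat gt t k i *\<^sub>v (blk g j - blk g k)) $ a))"
proof -
  have "M_block n E gt t g k $ a = (\<Sum>p\<in>Sk n E k. (case p of (i, j, k') \<Rightarrow>
     W_mat gt t j k *\<^sub>v (blk g i - blk g k) + W_mat gt t k i *\<^sub>v (blk g j - blk g k)) $ a)"
    unfolding M_block_def
  proof (rule index_finsum_vec[OF Sk_finite a], rule Pi_I)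
    fix p :: "nat \<times> nat \<times> nat"
    obtain i j k' where p: "p = (i, j, k')" by (cases p)
    show "(case p of (i, j, k') \<Rightarrow>
     W_mat gt t j k *\<^sub>v (blk g i - blk g k) + W_mat gt t k i *\<^sub>v (blk g j - blk g k)) \<in> carrier_vec 3"
      unfolding p by (simp add: add_carrier_vec)
  qed
  also have "\<dots> = (\<Sum>p\<in>Sk n E k. (case p of (i, j, k') \<Rightarrow>
     (W_mat gt t j k *\<^sub>v (blk g i - blk g k)) $ a + (W_mat gt t k i *\<^sub>v (blk g j - blk g k)) $ a))"
    by (rule sum.cong) (auto simp: a)
  finally show ?thesis .
qed

lemma blkB_diff:
  assumes x: "x \<in> carrier_vec 6" and i: "i < n" and k: "k < n"
  shows "blk (Bm n gt t *\<^sub>v x) i - blk (Bm n gt t *\<^sub>v x) k = Theta t *\<^sub>v (uvec x gt t i - uvec x gt t k)"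
proof -
  have "Theta t *\<^sub>v (uvec x gt t i - uvec x gt t k) = Theta t *\<^sub>v uvec x gt t i - Theta t *\<^sub>v uvec x gt t k"
    by (rule mult_minus_distrib_mat_vec[of _ 3 3]) auto
  moreover have "(tv x + Theta t *\<^sub>v uvec x gt t i) - (tv x + Theta t *\<^sub>v uvec x gt t k)
     = Theta t *\<^sub>v uvec x gt t i - Theta t *\<^sub>v uvec x gt t k"
    by (rule eq_vecI) (simp_all add: tv_def del: index_mult_mat_vec)
  ultimately show ?thesis using blkB[OF x i] blkB[OF x k] by simp
qed

lemma term_zero:
  assumes x: "x \<in> carrier_vec 6" and i: "i < n" and j: "j < n" and k: "k < n" and a: "a < 3"
  shows "(W_mat gt t j k *\<^sub>v (blk (Bm n gt t *\<^sub>v x) i - blk (Bm n gt t *\<^sub>v x) k)) $ a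
       + (W_mat gt t k i *\<^sub>v (blk (Bm n gt t *\<^sub>v x) j - blk (Bm n gt t *\<^sub>v x) k)) $ a = 0"
proof -
  have e1: "W_mat gt t j k *\<^sub>v (blk (Bm n gt t *\<^sub>v x) i - blk (Bm n gt t *\<^sub>v x) k)
     = vec 3 (\<lambda>a. (rotc gt t j $ a - rotc gt t k $ a) * (uvec x gt t i - uvec x gt t k) $ a)"
    unfolding blkB_diff[OF x i k] by (rule W_mult_Theta) simp
  have e2: "W_mat gt t k i *\<^sub>v (blk (Bm n gt t *\<^sub>v x) j - blk (Bm n gt t *\<^sub>v x) k)
     = vec 3 (\<lambda>a. (rotc gt t k $ a - rotc gt t i $ a) * (uvec x gt t j - uvec x gt t k) $ a)"
    unfolding blkB_diff[OF x j k] by (rule W_mult_Theta) simp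
  show ?thesis unfolding e1 e2 using a by (simp add: uvec_def algebra_simps)
qed

lemma M_block_B_zero:
  assumes x: "x \<in> carrier_vec 6" and a: "a < 3"
  shows "M_block n E gt t (Bm n gt t *\<^sub>v x) k $ a = 0"
  unfolding M_block_idx[OF a]
proof (rule sum.neutral, rule ballI)
  fix p assume p: "p \<in> Sk n E k"
  obtain i j k' where pe: "p = (i, j, k')" by (cases p)
  have b: "i < n" "j < n" "k < n" using Sk_bounds[of i j k' n E k] p pe by auto
  show "(case p of (i, j, k') \<Rightarrow>
     (W_mat gt t j k *\<^sub>v (blk (Bm n gt t *\<^sub>v x) i - blk (Bm n gt t *\<^sub>v x) k)) $ a +
     (W_mat gt t k i *\<^sub>v (blk (Bm n gt t *\<^sub>v x) j - blk (Bm n gt t *\<^sub>v x) k)) $ a) = 0"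
    unfolding pe using term_zero[OF x b a] by simp
qed

lemma M_apply_B_zero:
  assumes x: "x \<in> carrier_vec 6"
  shows "M_apply n E gt t (Bm n gt t *\<^sub>v x) = 0\<^sub>v (3 * n)"
  by (rule eq_vecI) (simp_all add: M_apply_def M_block_B_zero[OF x])

lemma lin_fun_sum:
  fixes f :: "'a::field vec \<Rightarrow> 'a"
  assumes add: "\<And>x y. x \<in> carrier_vec N \<Longrightarrow> y \<in> carrier_vec N \<Longrightarrow> f (x + y) = f x + f y"
    and sm: "\<And>c x. x \<in> carrier_vec N \<Longrightarrow> f (c \<cdot>\<^sub>v x) = c * f x"
    and g: "g \<in> carrier_vec N"
  shows "(\<Sum>c<N. f (unit_vec N c) * g $ c) = f g"
proof -
  have "m \<le> N \<Longrightarrow> (\<Sum>c<m. f (unit_vec N c) * g $ c) = f (vec N (\<lambda>i. if i < m then g $ i else 0))" for m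
  proof (induction m)
    case 0
    have "f (0 \<cdot>\<^sub>v 0\<^sub>v N) = 0" using sm[of "0\<^sub>v N" 0] by simp
    moreover have "vec N (\<lambda>i. if i < (0::nat) then g $ i else 0) = 0 \<cdot>\<^sub>v 0\<^sub>v N" by (auto simp: eq_vecI)
    ultimately show ?case by simp
  next
    case (Suc m)
    have e: "vec N (\<lambda>i. if i < Suc m then g $ i else 0) =
      vec N (\<lambda>i. if i < m then g $ i else 0) + g $ m \<cdot>\<^sub>v unit_vec N m"
      using Suc.prems by (intro eq_vecI) (auto simp: unit_vec_def not_less_less_Suc_eq)
    have "(\<Sum>c<Suc m. f (unit_vec N c) * g $ c) = f (vec N (\<lambda>i. if i < m then g $ i else 0)) + f (unit_vec N m) * g $ m" using Suc by simp
    also have "\<dots> = f (vec N (\<lambda>i. if i < Suc m then g $ i else 0))" unfolding e by (subst add) (auto simp: sm)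
    finally show ?case .
  qed
  moreover have "vec N (\<lambda>i. if i < N then g $ i else 0) = g" using g by (intro eq_vecI) auto
  ultimately show ?thesis by simp
qed


lemma Wv_idx:
  assumes a: "a < 3"
  shows "(W_mat gt t u v *\<^sub>v (blk g i - blk g k)) $ a = (\<Sum>b<3. W_mat gt t u v $$ (a, b) * (g $ (3*i+b) - g $ (3*k+b)))"
  using a by (simp add: scalar_prod_def lessThan_atLeast0 blk_def)

lemma lin_term_add:
  fixes x y :: "real vec"
  assumes i: "i < n" and k: "k < n" and x: "x \<in> carrier_vec (3*n)" and y: "y \<in> carrier_vec (3*n)"
  shows "(\<Sum>b<3. c b * ((x + y) $ (3*i+b) - (x + y) $ (3*k+b))) =
    (\<Sum>b<3. c b * (x $ (3*i+b) - x $ (3*k+b))) + (\<Sum>b<3. c b * (y $ (3*i+b) - y $ (3*k+b)))"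
proof -
  have dy: "dim_vec y = 3*n" using y by (rule carrier_vecD)
  have "(\<Sum>b<3. c b * ((x + y) $ (3*i+b) - (x + y) $ (3*k+b))) =
    (\<Sum>b<3. c b * (x $ (3*i+b) - x $ (3*k+b)) + c b * (y $ (3*i+b) - y $ (3*k+b)))"
  proof (rule sum.cong)
    fix b assume "b \<in> {..<(3::nat)}"
    hence "3*i+b < 3*n" "3*k+b < 3*n" using i k by auto
    thus "c b * ((x + y) $ (3*i+b) - (x + y) $ (3*k+b)) = c b * (x $ (3*i+b) - x $ (3*k+b)) + c b * (y $ (3*i+b) - y $ (3*k+b))"
      using dy by (simp add: algebra_simps)
  qed simp
  thus ?thesis by (simp add: sum.distrib)
qed

lemma lin_term_smult:
  fixes x :: "real vec"
  assumes i: "i < n" and k: "k < n" and x: "x \<in> carrier_vec (3*n)"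
  shows "(\<Sum>b<3. c b * ((d \<cdot>\<^sub>v x) $ (3*i+b) - (d \<cdot>\<^sub>v x) $ (3*k+b))) =
    d * (\<Sum>b<3. c b * (x $ (3*i+b) - x $ (3*k+b)))"
proof -
  have dx: "dim_vec x = 3*n" using x by (rule carrier_vecD)
  have "(\<Sum>b<3. c b * ((d \<cdot>\<^sub>v x) $ (3*i+b) - (d \<cdot>\<^sub>v x) $ (3*k+b))) =
    (\<Sum>b<3. d * (c b * (x $ (3*i+b) - x $ (3*k+b))))"
  proof (rule sum.cong)
    fix b assume "b \<in> {..<(3::nat)}"
    hence "3*i+b < 3*n" "3*k+b < 3*n" using i k by auto
    thus "c b * ((d \<cdot>\<^sub>v x) $ (3*i+b) - (d \<cdot>\<^sub>v x) $ (3*k+b)) = d * (c b * (x $ (3*i+b) - x $ (3*k+b)))"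
      using dx by (simp add: algebra_simps)
  qed simp
  thus ?thesis by (simp add: sum_distrib_left)
qed

definition Fterm :: "nat \<Rightarrow> (nat \<times> nat) set \<Rightarrow> real vec \<Rightarrow> real \<Rightarrow> nat \<Rightarrow> nat \<Rightarrow> real vec \<Rightarrow> nat \<times> nat \<times> nat \<Rightarrow> real" where
  "Fterm n E gt t k a g p = (case p of (i, j, k') \<Rightarrow>
     (\<Sum>b<3. W_mat gt t j k $$ (a, b) * (g $ (3*i+b) - g $ (3*k+b))) +
     (\<Sum>b<3. W_mat gt t k i $$ (a, b) * (g $ (3*j+b) - g $ (3*k+b))))"

lemma M_block_F:
  assumes a: "a < 3"
  shows "M_block n E gt t g k $ a = (\<Sum>p\<in>Sk n E k. Fterm n E gt t k a g p)"
  unfolding M_block_idx[OF a]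
  by (rule sum.cong) (auto simp: Fterm_def Wv_idx[OF a])

lemma Fterm_add:
  assumes p: "p \<in> Sk n E k" and x: "x \<in> carrier_vec (3*n)" and y: "y \<in> carrier_vec (3*n)"
  shows "Fterm n E gt t k a (x + y) p = Fterm n E gt t k a x p + Fterm n E gt t k a y p"
proof -
  obtain i j k' where pe: "p = (i, j, k')" by (cases p)
  have b: "i < n" "j < n" "k < n" using Sk_bounds[of i j k' n E k] p pe by auto
  show ?thesis unfolding pe Fterm_def
    using lin_term_add[OF b(1) b(3) x y] lin_term_add[OF b(2) b(3) x y] by simp
qed

lemma Fterm_smult:
  assumes p: "p \<in> Sk n E k" and x: "x \<in> carrier_vec (3*n)"
  shows "Fterm n E gt t k a (d \<cdot>\<^sub>v x) p = d * Fterm n E gt t k a x p"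
proof -
  obtain i j k' where pe: "p = (i, j, k')" by (cases p)
  have b: "i < n" "j < n" "k < n" using Sk_bounds[of i j k' n E k] p pe by auto
  show ?thesis unfolding pe Fterm_def
    using lin_term_smult[OF b(1) b(3) x] lin_term_smult[OF b(2) b(3) x] by (simp add: algebra_simps)
qed

lemma M_mat_mult:
  assumes g: "g \<in> carrier_vec (3*n)"
  shows "M_mat n E gt t *\<^sub>v g = M_apply n E gt t g"
proof (rule eq_vecI)
  fix r assume "r < dim_vec (M_apply n E gt t g)"
  hence r: "r < 3*n" by (simp add: M_apply_def)
  have a: "r mod 3 < 3" by simp
  define f where "f = (\<lambda>h. M_apply n E gt t h $ r)"
  have fF: "f h = (\<Sum>p\<in>Sk n E (r div 3). Fterm n E gt t (r div 3) (r mod 3) h p)" for h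
    unfolding f_def M_apply_def using r by (simp add: M_block_F[OF a])
  have add: "f (x + y) = f x + f y" if "x \<in> carrier_vec (3*n)" "y \<in> carrier_vec (3*n)" for x y
    unfolding fF by (simp add: Fterm_add[OF _ that] sum.distrib)
  have sm: "f (d \<cdot>\<^sub>v x) = d * f x" if "x \<in> carrier_vec (3*n)" for d x
    unfolding fF by (simp add: Fterm_smult[OF _ that] sum_distrib_left)
  have dg: "dim_vec g = 3*n" using g by (rule carrier_vecD)
  have "(M_mat n E gt t *\<^sub>v g) $ r = (\<Sum>c<3*n. M_mat n E gt t $$ (r, c) * g $ c)"
    using r dg by (simp add: M_mat_def scalar_prod_def lessThan_atLeast0)
  also have "\<dots> = (\<Sum>c<3*n. f (unit_vec (3*n) c) * g $ c)"
    by (rule sum.cong) (auto simp: M_mat_def f_def r)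
  also have "\<dots> = f g" by (rule lin_fun_sum[OF add sm g])
  finally show "(M_mat n E gt t *\<^sub>v g) $ r = M_apply n E gt t g $ r" unfolding f_def .
qed (simp add: M_mat_def M_apply_def)

lemma sp_extract:
  assumes "aff_spans_R {rotc gt t i $ a | i. i < n}"
  shows "\<exists>i j. i < n \<and> j < n \<and> rotc gt t i $ a \<noteq> rotc gt t j $ a"
  using assms unfolding aff_spans_R_def by auto

theorem lemma7:
  fixes n :: nat and E :: "(nat \<times> nat) set" and gt :: "real vec" and \<theta> :: real
  assumes E: "E \<subseteq> {(i, k). i < n \<and> k < n \<and> i \<noteq> k}"
    and gt: "gt \<in> carrier_vec (3 * n)"
    and spx: "aff_spans_R {rotc gt \<theta> i $ 0 | i. i < n}"
    and spy: "aff_spans_R {rotc gt \<theta> i $ 1 | i. i < n}"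
    and spphi: "aff_spans_R {rotc gt \<theta> i $ 2 | i. i < n}"
  shows "mat_kernel (M_mat n E gt \<theta>) = Pi_set n gt \<theta> \<longleftrightarrow>
         vec_space.rank (3 * n) (M_mat n E gt \<theta>) = 3 * n - 6"
proof -
  have sp: "\<exists>i j. i < n \<and> j < n \<and> rotc gt \<theta> i $ a \<noteq> rotc gt \<theta> j $ a" if a: "a < 3" for a
  proof -
    have "a = 0 \<or> a = 1 \<or> a = 2" using a by auto
    thus ?thesis using sp_extract[OF spx] sp_extract[OF spy] sp_extract[OF spphi] by auto
  qed
  obtain i0 j0 where ij0: "i0 < n" "j0 < n" "rotc gt \<theta> i0 $ 0 \<noteq> rotc gt \<theta> j0 $ 0"
    using sp[of 0] by auto
  have n2: "2 \<le> n"
  proof (rule ccontr)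
    assume "\<not> 2 \<le> n"
    hence "i0 = j0" using ij0 by auto
    thus False using ij0 by simp
  qed
  have M: "M_mat n E gt \<theta> \<in> carrier_mat (3*n) (3*n)" by (simp add: M_mat_def)
  have ker: "M_mat n E gt \<theta> *\<^sub>v (Bm n gt \<theta> *\<^sub>v x) = 0\<^sub>v (3*n)" if x: "x \<in> carrier_vec 6" for x
  proof -
    have "Bm n gt \<theta> *\<^sub>v x \<in> carrier_vec (3*n)" by (rule mult_mat_vec_carrier[OF Bm_carrier x])
    thus ?thesis using M_mat_mult M_apply_B_zero[OF x] by simp
  qed
  have inj: "x = 0\<^sub>v 6" if "x \<in> carrier_vec 6" "Bm n gt \<theta> *\<^sub>v x = 0\<^sub>v (3*n)" for x
    by (rule Bm_inj[OF sp that])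
  have iff1: "mat_kernel (M_mat n E gt \<theta>) = Pi_set n gt \<theta> \<longleftrightarrow> kernel_dim (M_mat n E gt \<theta>) = 6"
    unfolding Pi_image by (rule kernel_eq_image_iff[OF M Bm_carrier inj ker])
  have rn: "vec_space.rank (3 * n) (M_mat n E gt \<theta>) + kernel_dim (M_mat n E gt \<theta>) = 3 * n"
    by (rule rank_nullity_mat[OF M])
  show ?thesis unfolding iff1 using rn n2 by linarith
qed

end
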